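(* Let $(\Omega,\mathcal R,\mathcal K)$ be a bidirectional kinetic system. Then $(\Omega,\mathcal R,\mathcal K)$ admits a closed completion $(\Omega_c,\mathcal R_c,\mathcal K_c)$ such that $\pi_\Omega R\neq0$ for every $R\in\mathcal R_c$, and every $R\in\mathcal R$ is the image $\pi_\Omega\bar R$ of exactly one $\bar R\in\mathcal R_c$.
   Context: A chemical network is $(\Omega,\mathcal R)$ with $\Omega=\{1,\dots,N\}$ and $\mathcal R$ a finite set of nonzero integer vectors indexed by $\Omega$. $I(R)=\{i:R(i)<0\}$, $F(R)=\{i:R(i)>0\}$. Bidirectional: $R\in\mathcal R\Rightarrow-R\in\mathcal R$; $\mathcal R_s$ contains exactly one of each pair $\{R,-R\}$. Conservation laws $\mathcal M=(\mathrm{span}\,\mathcal R)^\perp$; conservative means $\mathcal M\cap(0,\infty)^\Omega\ne\emptyset$. A kinetic system $(\Omega,\mathcal R,\mathcal K)$ has rates $\mathcal K:\mathcal R\to(0,\infty)$, $K_R=\mathcal K(R)$; it satisfies detailed balance if there is $\bar N\in(0,\infty)^\Omega$ with $K_R\prod_{i\in I(R)}\bar N_i^{-R(i)}=K_{-R}\prod_{i\in F(R)}\bar N_i^{R(i)}$ for all $R\in\mathcal R_s$. It is closed if it satisfies detailed balance, is conservative, and $I(R)\ne\emptyset$, $F(R)\ne\emptyset$ for all $R\in\mathcal R$. For $A\subset\Omega_c$, $\pi_Av=(v(i))_{i\in A}$. Given a kinetic system $(\Omega_c,\mathcal R_c,\mathcal K_c)$ with $\Omega\subset\Omega_c$ and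 positive $n=(n_i)_{i\in\Omega_c\setminus\Omega}$, the reduced rates are $\mathcal K_c[n](R)=\sum_{\bar R\in\mathcal R_c:\pi_\Omega\bar R=R}\mathcal K_c(\bar R)\prod_{s\in(\Omega_c\setminus\Omega)\cap I(\bar R)}n_s^{-\bar R(s)}$ for $R\in\{\pi_\Omega\bar R\}\setminus\{0\}$. A completion of $(\Omega,\mathcal R,\mathcal K)$ is a kinetic system $(\Omega_c,\mathcal R_c,\mathcal K_c)$ with $\Omega\subset\Omega_c$, $\mathcal R=\{\pi_\Omega R:R\in\mathcal R_c\}$, and such that there exist concentrations $n_{\Omega_c\setminus\Omega}=(n_i)_{i\in\Omega_c\setminus\Omega}$ with $\mathcal K=\mathcal K_c[n_{\Omega_c\setminus\Omega}]$. *)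

theory Defs
  imports Complex_Main
begin

text \<open>Species are natural numbers; the species set of a network with N species is {1..N}.
  A vector indexed by Omega is a function nat => int vanishing outside Omega.\<close>

definition species :: "nat \<Rightarrow> nat set" where
  "species N = {1..N}"

definition vec_on :: "nat set \<Rightarrow> (nat \<Rightarrow> int) \<Rightarrow> bool" where
  "vec_on A v \<longleftrightarrow> (\<forall>i. i \<notin> A \<longrightarrow> v i = 0)"

definition proj :: "nat set \<Rightarrow> (nat \<Rightarrow> int) \<Rightarrow> (nat \<Rightarrow> int)" where
  "proj A v = (\<lambda>i. if i \<in> A then v i else 0)"

definition Iset :: "nat set \<Rightarrow> (nat \<Rightarrow> int) \<Rightarrow> nat set" where
  "Iset A R = {i \<in> A. R i < 0}"

definition Fset :: "nat set \<Rightarrow> (nat \<Rightarrow> int) \<Rightarrow> nat set" where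
  "Fset A R = {i \<in> A. R i > 0}"

definition chem_network :: "nat \<Rightarrow> (nat \<Rightarrow> int) set \<Rightarrow> bool" where
  "chem_network N Rs \<longleftrightarrow> finite Rs \<and>
     (\<forall>R\<in>Rs. R \<noteq> (\<lambda>_. 0) \<and> vec_on (species N) R)"

definition bidirectional :: "(nat \<Rightarrow> int) set \<Rightarrow> bool" where
  "bidirectional Rs \<longleftrightarrow> (\<forall>R\<in>Rs. (\<lambda>i. - R i) \<in> Rs)"

definition kinetic_system :: "nat \<Rightarrow> (nat \<Rightarrow> int) set \<Rightarrow> ((nat \<Rightarrow> int) \<Rightarrow> real) \<Rightarrow> bool" where
  "kinetic_system N Rs K \<longleftrightarrow> chem_network N Rs \<and> (\<forall>R\<in>Rs. K R > 0)"

definition is_half :: "(nat \<Rightarrow> int) set \<Rightarrow> (nat \<Rightarrow> int) set \<Rightarrow> bool" where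
  "is_half Rs Rss \<longleftrightarrow> Rss \<subseteq> Rs \<and>
     (\<forall>R\<in>Rs. (R \<in> Rss) \<noteq> ((\<lambda>i. - R i) \<in> Rss))"

definition detailed_balance :: "nat \<Rightarrow> (nat \<Rightarrow> int) set \<Rightarrow> ((nat \<Rightarrow> int) \<Rightarrow> real) \<Rightarrow> bool" where
  "detailed_balance N Rs K \<longleftrightarrow> bidirectional Rs \<and>
     (\<exists>Rss. is_half Rs Rss \<and>
       (\<exists>Nb :: nat \<Rightarrow> real. (\<forall>i\<in>species N. Nb i > 0) \<and>
          (\<forall>R\<in>Rss.
             K R * (\<Prod>i\<in>Iset (species N) R. Nb i ^ nat (- R i))
           = K (\<lambda>i. - R i) * (\<Prod>i\<in>Fset (species N) R. Nb i ^ nat (R i)))))"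

text \<open>Conservation laws M = (span Rs)^perp; conservative iff M meets the positive orthant.\<close>
definition conservative :: "nat \<Rightarrow> (nat \<Rightarrow> int) set \<Rightarrow> bool" where
  "conservative N Rs \<longleftrightarrow>
     (\<exists>m :: nat \<Rightarrow> real. (\<forall>i\<in>species N. m i > 0) \<and>
        (\<forall>R\<in>Rs. (\<Sum>i\<in>species N. m i * of_int (R i)) = 0))"

definition closed_system :: "nat \<Rightarrow> (nat \<Rightarrow> int) set \<Rightarrow> ((nat \<Rightarrow> int) \<Rightarrow> real) \<Rightarrow> bool" where
  "closed_system N Rs K \<longleftrightarrow> detailed_balance N Rs K \<and> conservative N Rs \<and>
     (\<forall>R\<in>Rs. Iset (species N) R \<noteq> {} \<and> Fset (species N) R \<noteq> {})"

definition reduced_rate ::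
  "nat \<Rightarrow> nat \<Rightarrow> (nat \<Rightarrow> int) set \<Rightarrow> ((nat \<Rightarrow> int) \<Rightarrow> real) \<Rightarrow> (nat \<Rightarrow> real)
     \<Rightarrow> (nat \<Rightarrow> int) \<Rightarrow> real" where
  "reduced_rate N Nc Rc Kc n R =
     (\<Sum>Rb\<in>{Rb \<in> Rc. proj (species N) Rb = R}.
        Kc Rb * (\<Prod>s\<in>(species Nc - species N) \<inter> Iset (species Nc) Rb. n s ^ nat (- Rb s)))"

definition completion ::
  "nat \<Rightarrow> (nat \<Rightarrow> int) set \<Rightarrow> ((nat \<Rightarrow> int) \<Rightarrow> real) \<Rightarrow>
   nat \<Rightarrow> (nat \<Rightarrow> int) set \<Rightarrow> ((nat \<Rightarrow> int) \<Rightarrow> real) \<Rightarrow> bool" where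
  "completion N Rs K Nc Rc Kc \<longleftrightarrow>
     kinetic_system Nc Rc Kc \<and> species N \<subseteq> species Nc \<and>
     Rs = proj (species N) ` Rc \<and>
     (\<exists>n :: nat \<Rightarrow> real. (\<forall>i\<in>species Nc - species N. n i > 0) \<and>
        (\<forall>R\<in>Rs. K R = reduced_rate N Nc Rc Kc n R))"

end

theory Submission
  imports Defs
begin

theorem theorem6p3:
  fixes N :: nat and Rs :: "(nat \<Rightarrow> int) set" and K :: "(nat \<Rightarrow> int) \<Rightarrow> real"
  assumes "kinetic_system N Rs K" and "bidirectional Rs"
  shows "\<exists>Nc Rc Kc. completion N Rs K Nc Rc Kc \<and> closed_system Nc Rc Kc \<and>
           (\<forall>Rb\<in>Rc. proj (species N) Rb \<noteq> (\<lambda>_. 0)) \<and>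
           (\<forall>R\<in>Rs. \<exists>!Rb. Rb \<in> Rc \<and> proj (species N) Rb = R)"
proof -
  have finRs: "finite Rs" and nz: "\<And>R. R \<in> Rs \<Longrightarrow> R \<noteq> (\<lambda>_. 0)"
    and von: "\<And>R. R \<in> Rs \<Longrightarrow> vec_on (species N) R"
    and Kpos: "\<And>R. R \<in> Rs \<Longrightarrow> K R > 0"
    using assms(1) unfolding kinetic_system_def chem_network_def by auto
  have negin: "\<And>R. R \<in> Rs \<Longrightarrow> (\<lambda>i. - R i) \<in> Rs"
    using assms(2) unfolding bidirectional_def by auto
  have zero_out: "\<And>R i. R \<in> Rs \<Longrightarrow> i > N \<or> i = 0 \<Longrightarrow> R i = 0"
    using von unfolding vec_on_def species_def by auto
  obtain h where h: "bij_betw h Rs {0..<card Rs}" using ex_bij_betw_finite_nat[OF finRs] by blast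
  define m where "m = card Rs"
  define Nc where "Nc = N + m"
  define a where "a = (\<lambda>R. N + 1 + h R)"
  define neg :: "(nat \<Rightarrow> int) \<Rightarrow> (nat \<Rightarrow> int)" where "neg = (\<lambda>R i. - R i)"
  define Rbar where "Rbar = (\<lambda>R i. R i + (if i = a R then 1 else 0) - (if i = a (neg R) then 1 else 0))"
  define Rc where "Rc = Rbar ` Rs"
  define Kc where "Kc = (\<lambda>Rb. K (proj (species N) Rb))"
  have neginR: "\<And>R. R \<in> Rs \<Longrightarrow> neg R \<in> Rs" using negin neg_def by simp
  have negneg: "neg (neg R) = R" for R unfolding neg_def by simp
  have inja: "inj_on a Rs" using h unfolding a_def bij_betw_def inj_on_def by auto
  have arange: "\<And>R. R \<in> Rs \<Longrightarrow> a R > N \<and> a R \<le> Nc"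
  proof -
    fix R assume "R \<in> Rs"
    hence "h R < card Rs" using h by (auto dest: bij_betwE)
    thus "a R > N \<and> a R \<le> Nc" unfolding a_def Nc_def m_def by simp
  qed
  have aSc: "\<And>R. R \<in> Rs \<Longrightarrow> a R \<in> species Nc - species N"
  proof -
    fix R assume "R \<in> Rs"
    from arange[OF this] show "a R \<in> species Nc - species N" unfolding species_def by simp
  qed
  have Rneq: "\<And>R. R \<in> Rs \<Longrightarrow> neg R \<noteq> R"
  proof
    fix R assume R: "R \<in> Rs" and e: "neg R = R"
    have "R = (\<lambda>_. 0)"
    proof
      fix i have "- R i = R i" using fun_cong[OF e, of i] unfolding neg_def by simp
      thus "R i = 0" by simp
    qed
    thus False using nz R by blast
  qed
  have aneq: "\<And>R. R \<in> Rs \<Longrightarrow> a (neg R) \<noteq> a R"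
    using inja Rneq neginR by (metis inj_on_def)
  have projRbar: "\<And>R. R \<in> Rs \<Longrightarrow> proj (species N) (Rbar R) = R"
  proof
    fix R i assume R: "R \<in> Rs"
    show "proj (species N) (Rbar R) i = R i"
      using arange[OF R] arange[OF neginR[OF R]] zero_out[OF R, of i]
      unfolding proj_def Rbar_def species_def by auto
  qed
  have Rbar_aR: "\<And>R. R \<in> Rs \<Longrightarrow> Rbar R (a R) = 1"
    using arange zero_out aneq unfolding Rbar_def by fastforce
  have Rbar_anR: "\<And>R. R \<in> Rs \<Longrightarrow> Rbar R (a (neg R)) = -1"
    using arange zero_out aneq neginR unfolding Rbar_def by fastforce
  have Rbar_nz: "\<And>R. R \<in> Rs \<Longrightarrow> Rbar R \<noteq> (\<lambda>_. 0)"
    using Rbar_aR by (metis zero_neq_one)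
  have Rbar_von: "\<And>R. R \<in> Rs \<Longrightarrow> vec_on (species Nc) (Rbar R)"
  proof -
    fix R assume R: "R \<in> Rs"
    show "vec_on (species Nc) (Rbar R)"
      unfolding vec_on_def
    proof (intro allI impI)
      fix i assume "i \<notin> species Nc"
      hence "i \<noteq> a R" "i \<noteq> a (neg R)" "i > N \<or> i = 0"
        using aSc[OF R] aSc[OF neginR[OF R]] unfolding species_def Nc_def by auto
      thus "Rbar R i = 0" using zero_out[OF R] unfolding Rbar_def by auto
    qed
  qed
  have negRbar: "\<And>R. R \<in> Rs \<Longrightarrow> neg (Rbar R) = Rbar (neg R)"
    unfolding Rbar_def using negneg by (auto simp: neg_def fun_eq_iff)
  have Kc_Rbar: "\<And>R. R \<in> Rs \<Longrightarrow> Kc (Rbar R) = K R"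
    unfolding Kc_def using projRbar by simp
  have finRc: "finite Rc" unfolding Rc_def using finRs by simp
  have kin: "kinetic_system Nc Rc Kc"
    unfolding kinetic_system_def chem_network_def Rc_def
    using finRs Rbar_nz Rbar_von Kc_Rbar Kpos by auto
  have sub: "species N \<subseteq> species Nc" unfolding species_def Nc_def by auto
  have RsEq: "Rs = proj (species N) ` Rc"
    unfolding Rc_def image_image using projRbar by simp
  have fiber: "\<And>R. R \<in> Rs \<Longrightarrow> {Rb \<in> Rc. proj (species N) Rb = R} = {Rbar R}"
    unfolding Rc_def using projRbar by auto
  have red: "\<And>R. R \<in> Rs \<Longrightarrow> K R = reduced_rate N Nc Rc Kc (\<lambda>_. 1) R"
    unfolding reduced_rate_def using fiber Kc_Rbar by simp
  have compl: "completion N Rs K Nc Rc Kc"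
    unfolding completion_def using kin sub RsEq red by (intro conjI exI[of _ "\<lambda>_. 1"]) auto
  have bid: "bidirectional Rc"
    unfolding bidirectional_def Rc_def
  proof
    fix Rb assume "Rb \<in> Rbar ` Rs"
    then obtain R where R: "R \<in> Rs" "Rb = Rbar R" by blast
    have "(\<lambda>i. - Rb i) = neg (Rbar R)" using R unfolding neg_def by simp
    also have "\<dots> = Rbar (neg R)" using negRbar R by simp
    finally show "(\<lambda>i. - Rb i) \<in> Rbar ` Rs" using neginR R by simp
  qed
  define Rss where "Rss = {Rb \<in> Rc. Rb (LEAST i. Rb i \<noteq> 0) > 0}"
  have half: "is_half Rc Rss"
    unfolding is_half_def
  proof (intro conjI ballI)
    show "Rss \<subseteq> Rc" unfolding Rss_def by auto
    fix Rb assume Rb: "Rb \<in> Rc"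
    then obtain R where R: "R \<in> Rs" "Rb = Rbar R" unfolding Rc_def by blast
    have ex: "\<exists>i. Rb i \<noteq> 0" using Rbar_nz[OF R(1)] R(2) by auto
    have L: "(LEAST i. - Rb i \<noteq> 0) = (LEAST i. Rb i \<noteq> 0)" by simp
    have nzL: "Rb (LEAST i. Rb i \<noteq> 0) \<noteq> 0" using LeastI_ex[OF ex] .
    have nin: "(\<lambda>i. - Rb i) \<in> Rc" using bid Rb unfolding bidirectional_def by blast
    show "(Rb \<in> Rss) \<noteq> ((\<lambda>i. - Rb i) \<in> Rss)"
      unfolding Rss_def using Rb nin nzL L by auto
  qed
  define Nb :: "nat \<Rightarrow> real" where "Nb = (\<lambda>i. if i \<in> a ` Rs then K (inv_into Rs a i) else 1)"
  have Nbpos: "\<forall>i\<in>species Nc. Nb i > 0"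
    unfolding Nb_def using Kpos inv_into_into by (auto intro: Kpos inv_into_into)
  have Nba: "\<And>R. R \<in> Rs \<Longrightarrow> Nb (a R) = K R"
    unfolding Nb_def using inja by simp
  have Nb1: "\<And>i. i \<le> N \<Longrightarrow> Nb i = 1"
    unfolding Nb_def using arange by force
  have prodI: "(\<Prod>i\<in>Iset (species Nc) (Rbar R). Nb i ^ nat (- Rbar R i)) = K (neg R)"
    if R: "R \<in> Rs" for R
  proof -
    have fin: "finite (Iset (species Nc) (Rbar R))" unfolding Iset_def species_def by simp
    have sub: "{a (neg R)} \<subseteq> Iset (species Nc) (Rbar R)"
      using aSc[OF neginR[OF R]] Rbar_anR[OF R] unfolding Iset_def by auto
    have one: "Nb i ^ nat (- Rbar R i) = 1" if i: "i \<in> Iset (species Nc) (Rbar R) - {a (neg R)}" for i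
    proof -
      have neg0: "Rbar R i < 0" "i \<noteq> a (neg R)" using i unfolding Iset_def by auto
      have "i \<le> N"
      proof (rule ccontr)
        assume "\<not> i \<le> N"
        hence "R i = 0" using zero_out[OF R, of i] by simp
        hence "Rbar R i \<ge> 0" using neg0(2) unfolding Rbar_def by simp
        thus False using neg0 by simp
      qed
      thus ?thesis using Nb1 by simp
    qed
    have "(\<Prod>i\<in>Iset (species Nc) (Rbar R). Nb i ^ nat (- Rbar R i)) = (\<Prod>i\<in>{a (neg R)}. Nb i ^ nat (- Rbar R i))"
      using prod.mono_neutral_left[OF fin sub] one by (metis (no_types, lifting))
    also have "\<dots> = K (neg R)" using Rbar_anR[OF R] Nba[OF neginR[OF R]] by simp
    finally show ?thesis .
  qed
  have prodF: "(\<Prod>i\<in>Fset (species Nc) (Rbar R). Nb i ^ nat (Rbar R i)) = K R"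
    if R: "R \<in> Rs" for R
  proof -
    have fin: "finite (Fset (species Nc) (Rbar R))" unfolding Fset_def species_def by simp
    have sub: "{a R} \<subseteq> Fset (species Nc) (Rbar R)"
      using aSc[OF R] Rbar_aR[OF R] unfolding Fset_def by auto
    have one: "Nb i ^ nat (Rbar R i) = 1" if i: "i \<in> Fset (species Nc) (Rbar R) - {a R}" for i
    proof -
      have neg0: "Rbar R i > 0" "i \<noteq> a R" using i unfolding Fset_def by auto
      have "i \<le> N"
      proof (rule ccontr)
        assume "\<not> i \<le> N"
        hence "R i = 0" using zero_out[OF R, of i] by simp
        hence "Rbar R i \<le> 0" using neg0(2) unfolding Rbar_def by simp
        thus False using neg0 by simp
      qed
      thus ?thesis using Nb1 by simp
    qed
    have "(\<Prod>i\<in>Fset (species Nc) (Rbar R). Nb i ^ nat (Rbar R i)) = (\<Prod>i\<in>{a R}. Nb i ^ nat (Rbar R i))"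
      using prod.mono_neutral_left[OF fin sub] one by (metis (no_types, lifting))
    also have "\<dots> = K R" using Rbar_aR[OF R] Nba[OF R] by simp
    finally show ?thesis .
  qed
  have db: "detailed_balance Nc Rc Kc"
    unfolding detailed_balance_def
  proof (intro conjI exI[of _ Rss] exI[of _ Nb] ballI)
    show "bidirectional Rc" by (rule bid)
    show "is_half Rc Rss" by (rule half)
    show "\<And>i. i \<in> species Nc \<Longrightarrow> 0 < Nb i" using Nbpos by blast
    fix Rb assume "Rb \<in> Rss"
    hence "Rb \<in> Rc" unfolding Rss_def by simp
    then obtain R where R: "R \<in> Rs" "Rb = Rbar R" unfolding Rc_def by blast
    have e: "(\<lambda>i. - Rb i) = Rbar (neg R)" using R negRbar unfolding neg_def by simp
    show "Kc Rb * (\<Prod>i\<in>Iset (species Nc) Rb. Nb i ^ nat (- Rb i)) =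
          Kc (\<lambda>i. - Rb i) * (\<Prod>i\<in>Fset (species Nc) Rb. Nb i ^ nat (Rb i))"
      unfolding e using R prodI prodF Kc_Rbar neginR by simp
  qed
  define sig :: "(nat \<Rightarrow> int) \<Rightarrow> real" where "sig = (\<lambda>R. \<Sum>i\<in>species N. real_of_int (R i))"
  define w where "w = (\<lambda>R. 1 + max 0 (- sig R))"
  define mw where "mw = (\<lambda>i. if i \<in> a ` Rs then w (inv_into Rs a i) else 1)"
  have mwpos: "\<forall>i\<in>species Nc. mw i > 0" unfolding mw_def w_def by auto
  have mwa: "\<And>R. R \<in> Rs \<Longrightarrow> mw (a R) = w R" unfolding mw_def using inja by simp
  have mw1: "\<And>i. i \<le> N \<Longrightarrow> mw i = 1" unfolding mw_def using arange by force
  have signeg: "sig (neg R) = - sig R" for R unfolding sig_def neg_def by (simp add: sum_negf)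
  have cons: "(\<Sum>i\<in>species Nc. mw i * of_int (Rbar R i)) = 0" if R: "R \<in> Rs" for R
  proof -
    have split: "mw i * of_int (Rbar R i) = mw i * of_int (R i) + (if i = a R then mw i else 0)
        - (if i = a (neg R) then mw i else 0)" for i
      unfolding Rbar_def by (auto simp: algebra_simps)
    have s1: "(\<Sum>i\<in>species Nc. mw i * of_int (R i)) = sig R"
    proof -
      have "(\<Sum>i\<in>species Nc. mw i * of_int (R i)) = (\<Sum>i\<in>species N. mw i * of_int (R i))"
        using zero_out[OF R] sub
        by (intro sum.mono_neutral_right) (auto simp: species_def)
      also have "\<dots> = sig R" unfolding sig_def using mw1 by (auto simp: species_def)
      finally show ?thesis .
    qed
    have "(\<Sum>i\<in>species Nc. mw i * of_int (Rbar R i)) = sig R + mw (a R) - mw (a (neg R))"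
      unfolding split sum.distrib sum_subtractf s1
      using aSc[OF R] aSc[OF neginR[OF R]] by (simp add: species_def)
    also have "\<dots> = 0" using mwa[OF R] mwa[OF neginR[OF R]] signeg[of R] unfolding w_def by simp
    finally show ?thesis .
  qed
  have consv: "conservative Nc Rc"
    unfolding conservative_def Rc_def using mwpos cons by (intro exI[of _ mw]) auto
  have IF: "\<forall>R\<in>Rc. Iset (species Nc) R \<noteq> {} \<and> Fset (species Nc) R \<noteq> {}"
  proof
    fix Rb assume "Rb \<in> Rc"
    then obtain R where R: "R \<in> Rs" "Rb = Rbar R" unfolding Rc_def by blast
    have "a (neg R) \<in> Iset (species Nc) Rb" "a R \<in> Fset (species Nc) Rb"
      using R aSc[OF R(1)] aSc[OF neginR[OF R(1)]] Rbar_aR[OF R(1)] Rbar_anR[OF R(1)]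
      unfolding Iset_def Fset_def by auto
    thus "Iset (species Nc) Rb \<noteq> {} \<and> Fset (species Nc) Rb \<noteq> {}" by auto
  qed
  have closed: "closed_system Nc Rc Kc"
    unfolding closed_system_def using db consv IF by simp
  have pnz: "\<forall>Rb\<in>Rc. proj (species N) Rb \<noteq> (\<lambda>_. 0)"
    unfolding Rc_def using projRbar nz by auto
  have uniq: "\<forall>R\<in>Rs. \<exists>!Rb. Rb \<in> Rc \<and> proj (species N) Rb = R"
  proof
    fix R assume R: "R \<in> Rs"
    show "\<exists>!Rb. Rb \<in> Rc \<and> proj (species N) Rb = R"
    proof (rule ex1I[of _ "Rbar R"])
      show "Rbar R \<in> Rc \<and> proj (species N) (Rbar R) = R" using R projRbar unfolding Rc_def by simp
      fix Rb assume "Rb \<in> Rc \<and> proj (species N) Rb = R"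
      hence "Rb \<in> {Rb \<in> Rc. proj (species N) Rb = R}" by simp
      thus "Rb = Rbar R" using fiber[OF R] by simp
    qed
  qed
  show ?thesis using compl closed pnz uniq by blast
qed

end
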